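(* Let $V$ be a finite dimensional real vector space and let $\Delta \subset V \setminus \{0\}$ satisfy $\Delta = -\Delta$. Then every strongly parabolic subset of $\Delta$ is a parabolic subset of $\Delta$.
   Context: A subset $P \subset \Delta$ is called parabolic if (1) $\Delta = P \cup -P$, and (2) whenever $\alpha, \beta \in P$ and $\alpha+\beta \in \Delta$, then $\alpha+\beta \in P$. A partition $\Delta = \Delta^- \sqcup \Delta^0 \sqcup \Delta^+$ is called a triangular decomposition of $\Delta$ if there is a linear function $\lambda \in V^*$ with $\Delta^0 = \Delta \cap \ker \lambda$ and $\Delta^{\pm} = \{\alpha \in \Delta \mid \lambda(\alpha) \gtrless 0\}$. A subset $P \subset \Delta$ is called strongly parabolic (defined recursively) if $P = \Delta$, or $P = P^0 \sqcup \Delta^+$ for some triangular decomposition $\Delta = \Delta^- \sqcup \Delta^0 \sqcup \Delta^+$ (with linear function $\lambda$) and some subset $P^0 \subset \Delta^0$ that is strongly parabolic as a subset of $\Delta^0$ regarded inside the vector space $\ker \lambda$. *)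

theory Defs
  imports "HOL-Analysis.Analysis"
begin

definition lin_functional_on :: "'a::real_vector set \<Rightarrow> ('a \<Rightarrow> real) \<Rightarrow> bool" where
  "lin_functional_on W f \<longleftrightarrow>
     (\<forall>x\<in>W. \<forall>y\<in>W. f (x + y) = f x + f y) \<and> (\<forall>c. \<forall>x\<in>W. f (c *\<^sub>R x) = c * f x)"

definition parabolic :: "'a::real_vector set \<Rightarrow> 'a set \<Rightarrow> bool" where
  "parabolic \<Delta> P \<longleftrightarrow> P \<subseteq> \<Delta> \<and> \<Delta> = P \<union> uminus ` P \<and>
     (\<forall>\<alpha>\<in>P. \<forall>\<beta>\<in>P. \<alpha> + \<beta> \<in> \<Delta> \<longrightarrow> \<alpha> + \<beta> \<in> P)"

text \<open>strongly_parabolic W \<Delta> P: P is strongly parabolic in \<Delta>, where \<Delta> is regarded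
  inside the ambient vector space W (a subspace of the type).  The triangular decomposition
  is given by a linear functional \<lambda> on W; the recursion passes to ker \<lambda> (inside W).\<close>
inductive strongly_parabolic :: "'a::real_vector set \<Rightarrow> 'a set \<Rightarrow> 'a set \<Rightarrow> bool" where
  whole: "strongly_parabolic W \<Delta> \<Delta>"
| step: "\<lbrakk> subspace W; lin_functional_on W l; P0 \<subseteq> {\<alpha>\<in>\<Delta>. l \<alpha> = 0};
           strongly_parabolic {v\<in>W. l v = 0} {\<alpha>\<in>\<Delta>. l \<alpha> = 0} P0 \<rbrakk>
         \<Longrightarrow> strongly_parabolic W \<Delta> (P0 \<union> {\<alpha>\<in>\<Delta>. l \<alpha> > 0})"

end

theory Submission
  imports Defs
begin

lemma sp_parabolic:
  assumes "strongly_parabolic W \<Delta> P"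
  shows "\<Delta> \<subseteq> W \<Longrightarrow> uminus ` \<Delta> = \<Delta> \<Longrightarrow> parabolic \<Delta> P"
  using assms
proof (induction rule: strongly_parabolic.induct)
  case (whole W \<Delta>)
  then show ?case unfolding parabolic_def by auto
next
  case (step W l P0 \<Delta>)
  have add: "\<And>x y. x \<in> W \<Longrightarrow> y \<in> W \<Longrightarrow> l (x + y) = l x + l y"
    using step.hyps(2) unfolding lin_functional_on_def by blast
  have neg: "\<And>x. x \<in> W \<Longrightarrow> l (- x) = - l x"
  proof -
    fix x assume "x \<in> W"
    then have "l ((-1) *\<^sub>R x) = (-1) * l x"
      using step.hyps(2) unfolding lin_functional_on_def by blast
    then show "l (- x) = - l x" by simp
  qed
  have negD: "\<And>x. x \<in> \<Delta> \<Longrightarrow> - x \<in> \<Delta>" using step.prems(2) by force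
  let ?D0 = "{\<alpha>\<in>\<Delta>. l \<alpha> = 0}"
  have "?D0 \<subseteq> {v\<in>W. l v = 0}" using step.prems(1) by auto
  moreover have "uminus ` ?D0 = ?D0"
  proof
    show "uminus ` ?D0 \<subseteq> ?D0" using negD neg step.prems(1) by auto
    show "?D0 \<subseteq> uminus ` ?D0"
    proof
      fix x assume x: "x \<in> ?D0"
      then have "-x \<in> ?D0" using negD neg step.prems(1) by auto
      then show "x \<in> uminus ` ?D0" by (metis image_eqI minus_minus)
    qed
  qed
  ultimately have IH: "parabolic ?D0 P0" using step.IH by blast
  show ?case unfolding parabolic_def
  proof (intro conjI ballI impI)
    show "P0 \<union> {\<alpha> \<in> \<Delta>. 0 < l \<alpha>} \<subseteq> \<Delta>" using step.hyps(3) by auto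
    show "\<Delta> = P0 \<union> {\<alpha> \<in> \<Delta>. 0 < l \<alpha>} \<union> uminus ` (P0 \<union> {\<alpha> \<in> \<Delta>. 0 < l \<alpha>})"
    proof
      show "\<Delta> \<subseteq> P0 \<union> {\<alpha> \<in> \<Delta>. 0 < l \<alpha>} \<union> uminus ` (P0 \<union> {\<alpha> \<in> \<Delta>. 0 < l \<alpha>})"
      proof
        fix x assume x: "x \<in> \<Delta>"
        have xW: "x \<in> W" using x step.prems(1) by auto
        consider "l x > 0" | "l x = 0" | "l x < 0" by linarith
        then show "x \<in> P0 \<union> {\<alpha> \<in> \<Delta>. 0 < l \<alpha>} \<union> uminus ` (P0 \<union> {\<alpha> \<in> \<Delta>. 0 < l \<alpha>})"
        proof cases
          case 1 then show ?thesis using x by auto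
        next
          case 2
          then have "x \<in> P0 \<union> uminus ` P0" using IH x unfolding parabolic_def by blast
          then show ?thesis by auto
        next
          case 3
          then have "-x \<in> {\<alpha> \<in> \<Delta>. 0 < l \<alpha>}" using negD x neg xW by auto
          then have "x \<in> uminus ` {\<alpha> \<in> \<Delta>. 0 < l \<alpha>}"
            by (rule image_eqI[rotated]) simp
          then show ?thesis by blast
        qed
      qed
      show "P0 \<union> {\<alpha> \<in> \<Delta>. 0 < l \<alpha>} \<union> uminus ` (P0 \<union> {\<alpha> \<in> \<Delta>. 0 < l \<alpha>}) \<subseteq> \<Delta>"
      proof
        fix x assume "x \<in> P0 \<union> {\<alpha> \<in> \<Delta>. 0 < l \<alpha>} \<union> uminus ` (P0 \<union> {\<alpha> \<in> \<Delta>. 0 < l \<alpha>})"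
        then consider "x \<in> \<Delta>" | y where "y \<in> \<Delta>" "x = - y" using step.hyps(3) by blast
        then show "x \<in> \<Delta>" using negD by cases auto
      qed
    qed
  next
    fix a b assume a: "a \<in> P0 \<union> {\<alpha> \<in> \<Delta>. 0 < l \<alpha>}" and b: "b \<in> P0 \<union> {\<alpha> \<in> \<Delta>. 0 < l \<alpha>}"
      and ab: "a + b \<in> \<Delta>"
    have aD: "a \<in> \<Delta>" "b \<in> \<Delta>" using a b step.hyps(3) by auto
    then have W: "a \<in> W" "b \<in> W" using step.prems(1) by auto
    have la: "l a \<ge> 0" "l b \<ge> 0" using a b step.hyps(3) by auto
    show "a + b \<in> P0 \<union> {\<alpha> \<in> \<Delta>. 0 < l \<alpha>}"
    proof (cases "a \<in> P0 \<and> b \<in> P0")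
      case True
      then have "l a = 0" "l b = 0" using step.hyps(3) by auto
      then have "a + b \<in> ?D0" using ab add W by auto
      then show ?thesis using IH True unfolding parabolic_def by blast
    next
      case False
      then have "l a > 0 \<or> l b > 0" using a b by auto
      then have "l (a + b) > 0" using add W la by auto
      then show ?thesis using ab by auto
    qed
  qed
qed

theorem proposition1p2:
  fixes \<Delta> P :: "'a::euclidean_space set"
  assumes "0 \<notin> \<Delta>"
    and "uminus ` \<Delta> = \<Delta>"
    and "strongly_parabolic UNIV \<Delta> P"
  shows "parabolic \<Delta> P"
  using sp_parabolic[OF assms(3)] assms(2) by blast

end
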